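(* Let $\sum_{n=1}^{\infty}x_n$ be a divergent series of positive real terms with $\lim_{n\to\infty}x_n=0$, and let $S=\{\sum_{n=1}^{\infty}(x_n-x_{\sigma(n)}) : \sigma\in S_\infty,\ \text{the series converges}\}$. If $b\in S$, then $[b,\infty)\subseteq S$.
   Context: $S_\infty$ denotes the set of all permutations of $\mathbb{N}$. *)

theory Defs
  imports "HOL-Analysis.Analysis"
begin

text \<open>Sequences are indexed from 0 (x 0 corresponds to x_1). Permutations of the
naturals are bijections nat to nat.\<close>

definition rearr_diff_sums :: "(nat \<Rightarrow> real) \<Rightarrow> real set" where
  "rearr_diff_sums x = {b. \<exists>\<sigma>. bij \<sigma> \<and> (\<lambda>n. x n - x (\<sigma> n)) sums b}"

end

theory Submission
  imports Defs
begin

locale cons =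
  fixes y :: "nat \<Rightarrow> real" and d :: real and a :: "nat \<Rightarrow> nat"
  assumes pos: "\<And>n. y n > 0" and div: "\<not> summable y" and lim: "y \<longlonglongrightarrow> 0"
    and dnn: "d \<ge> 0" and amono: "strict_mono a" and asmall: "\<And>k. y (a k) \<le> (1/2)^k"
begin

definition A where "A = range a"
definition nextA :: "nat \<Rightarrow> nat set \<Rightarrow> nat" where
  "nextA N V = (LEAST m. m \<in> A \<and> N < m \<and> m \<notin> V)"
definition ch :: "nat \<Rightarrow> nat set \<Rightarrow> nat" where
  "ch N V = (if N \<in> V then nextA N V else
    if sum y ({..<N} - V) + y N \<le> d then nextA N V
    else if {..<N} - V \<noteq> {} \<and> y N \<le> y (Min ({..<N} - V)) then Min ({..<N} - V)
    else N)"
primrec U :: "nat \<Rightarrow> nat set" where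
  "U 0 = {}" | "U (Suc N) = insert (ch N (U N)) (U N)"
definition pi where "pi N = ch N (U N)"
definition P where "P N = {..<N} - U N"

lemma infA: "infinite A"
  unfolding A_def using amono by (simp add: range_inj_infinite strict_mono_imp_inj_on)

lemma finU: "finite (U N)" by (induction N) auto

lemma nextA: assumes "finite V" shows "nextA N V \<in> A \<and> N < nextA N V \<and> nextA N V \<notin> V"
proof -
  have "infinite (A - V - {..N})" using infA assms by simp
  then obtain m where "m \<in> A - V - {..N}" by (metis all_not_in_conv finite.emptyI)
  hence "\<exists>m. m \<in> A \<and> N < m \<and> m \<notin> V" by auto
  thus ?thesis unfolding nextA_def by (rule LeastI_ex)
qed

lemma U_Suc: "U (Suc N) = insert (pi N) (U N)" by (simp add: pi_def)
lemmas [simp del] = U.simps(2)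

lemma finP: "finite (P N)" unfolding P_def by simp

lemma pi_notin: "pi N \<notin> U N"
proof -
  have f: "finite (U N)" by (rule finU)
  have "finite ({..<N} - U N)" by simp
  hence "{..<N} - U N \<noteq> {} \<Longrightarrow> Min ({..<N} - U N) \<in> {..<N} - U N" using Min_in by blast
  thus ?thesis using nextA[OF f, of N] unfolding pi_def ch_def by auto
qed


lemma U_mono: "m \<le> n \<Longrightarrow> U m \<subseteq> U n"
  by (induction n rule: dec_induct) (auto simp: U_Suc)

lemma U_img: "U N = pi ` {..<N}"
  by (induction N) (auto simp: U_Suc lessThan_Suc)

lemma inj_pi: "inj pi"
proof (rule injI, rule ccontr)
  fix m n assume e: "pi m = pi n" and ne: "m \<noteq> n"
  { fix m n assume "pi m = pi n" "m < n"
    hence "pi m \<in> U n" using U_mono[of "Suc m" n] by (auto simp: U_Suc)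
    hence False using pi_notin `pi m = pi n` by simp }
  thus False using e ne by (metis linorder_neqE_nat)
qed

lemma pi_cases: "(N \<in> U N \<and> pi N = nextA N (U N))
  \<or> (N \<notin> U N \<and> sum y (P N) + y N \<le> d \<and> pi N = nextA N (U N))
  \<or> (N \<notin> U N \<and> \<not> sum y (P N) + y N \<le> d \<and> P N \<noteq> {} \<and> y N \<le> y (Min (P N)) \<and> pi N = Min (P N))
  \<or> (N \<notin> U N \<and> \<not> sum y (P N) + y N \<le> d \<and> \<not> (P N \<noteq> {} \<and> y N \<le> y (Min (P N))) \<and> pi N = N)"
  unfolding pi_def ch_def P_def by auto

lemma high: "m \<in> U N \<Longrightarrow> N \<le> m \<Longrightarrow> m \<in> A"
proof (induction N arbitrary: m)
  case 0 thus ?case by simp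
next
  case (Suc N)
  have mn: "Min (P N) < N" if "P N \<noteq> {}" using Min_in[OF finP that] unfolding P_def by auto
  have "N < pi N \<Longrightarrow> pi N \<in> A"
  proof -
    assume h: "N < pi N"
    show ?thesis using pi_cases[of N]
    proof (elim disjE)
      assume "N \<notin> U N \<and> \<not> sum y (P N) + y N \<le> d \<and> P N \<noteq> {} \<and> y N \<le> y (Min (P N)) \<and> pi N = Min (P N)"
      thus ?thesis using mn h by auto
    qed (use nextA[OF finU] h in auto)
  qed
  thus ?case using Suc by (auto simp: U_Suc)
qed

lemma P_Suc: "P (Suc N) = (P N \<union> ({N} - U N)) - {pi N}"
  unfolding P_def by (auto simp: U_Suc lessThan_Suc)

lemma sum_step:
  "(sum y (P (Suc N)) = sum y (P N) \<and> (N \<in> U N \<or> (N \<notin> U N \<and> \<not> sum y (P N) + y N \<le> d \<and> \<not> (P N \<noteq> {} \<and> y N \<le> y (Min (P N))))))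
   \<or> (N \<notin> U N \<and> sum y (P N) + y N \<le> d \<and> sum y (P (Suc N)) = sum y (P N) + y N)
   \<or> (N \<notin> U N \<and> \<not> sum y (P N) + y N \<le> d \<and> P N \<noteq> {} \<and> y N \<le> y (Min (P N))
       \<and> sum y (P (Suc N)) = sum y (P N) + y N - y (Min (P N)))"
proof -
  have sub: "P N \<subseteq> {..<N}" unfolding P_def by auto
  have nN: "N \<notin> P N" unfolding P_def by auto
  show ?thesis using pi_cases[of N]
  proof (elim disjE)
    assume h: "N \<in> U N \<and> pi N = nextA N (U N)"
    have gt: "N < pi N" using h nextA[OF finU, of N N] by simp
    have "pi N \<notin> P N" using gt sub by auto
    hence "P (Suc N) = P N" unfolding P_Suc using h by simp
    thus ?thesis using h by simp
  next
    assume h: "N \<notin> U N \<and> sum y (P N) + y N \<le> d \<and> pi N = nextA N (U N)"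
    have gt: "N < pi N" using h nextA[OF finU, of N N] by simp
    have "pi N \<notin> insert N (P N)" using gt sub by auto
    moreover have "{N} - U N = {N}" using h by auto
    ultimately have "P (Suc N) = insert N (P N)" unfolding P_Suc using h by simp
    thus ?thesis using h nN finP by simp
  next
    assume h: "N \<notin> U N \<and> \<not> sum y (P N) + y N \<le> d \<and> P N \<noteq> {} \<and> y N \<le> y (Min (P N)) \<and> pi N = Min (P N)"
    have mi: "Min (P N) \<in> P N" using Min_in[OF finP] h by blast
    have "Min (P N) \<noteq> N" using mi nN by auto
    hence "P (Suc N) = insert N (P N - {Min (P N)})" unfolding P_Suc using h by auto
    hence "sum y (P (Suc N)) = sum y (P N - {Min (P N)}) + y N" using nN finP by simp
    also have "\<dots> = sum y (P N) + y N - y (Min (P N))" using sum_diff1[OF finP, of y] mi by simp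
    finally show ?thesis using h by simp
  next
    assume h: "N \<notin> U N \<and> \<not> sum y (P N) + y N \<le> d \<and> \<not> (P N \<noteq> {} \<and> y N \<le> y (Min (P N))) \<and> pi N = N"
    hence "P (Suc N) = P N" using P_Suc[of N] nN by auto
    thus ?thesis using h by simp
  qed
qed

lemma Psum_le: "sum y (P N) \<le> d"
proof (induction N)
  case 0 thus ?case using dnn by (simp add: P_def)
next
  case (Suc N) thus ?case using sum_step[of N] pos[of "Min (P N)"] by auto
qed

lemma Psum_lower:
  assumes "y N \<le> e" "P N \<noteq> {} \<longrightarrow> y (Min (P N)) \<le> e"
  shows "sum y (P (Suc N)) \<ge> min (sum y (P N)) (d - e)"
    and "N \<notin> U N \<Longrightarrow> \<not> sum y (P N) + y N \<le> d \<Longrightarrow> sum y (P (Suc N)) \<ge> d - e"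
proof -
  show "sum y (P (Suc N)) \<ge> min (sum y (P N)) (d - e)" using sum_step[of N]
  proof (elim disjE)
    assume h: "N \<notin> U N \<and> \<not> sum y (P N) + y N \<le> d \<and> P N \<noteq> {} \<and> y N \<le> y (Min (P N))
       \<and> sum y (P (Suc N)) = sum y (P N) + y N - y (Min (P N))"
    thus ?thesis using assms by auto
  qed (use pos[of N] in auto)
  assume n1: "N \<notin> U N" and n2: "\<not> sum y (P N) + y N \<le> d"
  show "sum y (P (Suc N)) \<ge> d - e" using sum_step[of N]
  proof (elim disjE)
    assume h: "N \<notin> U N \<and> \<not> sum y (P N) + y N \<le> d \<and> P N \<noteq> {} \<and> y N \<le> y (Min (P N))
       \<and> sum y (P (Suc N)) = sum y (P N) + y N - y (Min (P N))"
    thus ?thesis using assms by auto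
  qed (use n1 n2 assms in auto)
qed

lemma geo: "K \<le> M \<Longrightarrow> (\<Sum>k\<in>{K..<M}. (1/2::real)^k) = 2*(1/2)^K - 2*(1/2)^M"
proof (induction M rule: dec_induct)
  case base thus ?case by simp
next
  case (step M) thus ?case by (simp add: sum.atLeastLessThan_Suc)
qed

lemma geo2: assumes "finite G" "G \<subseteq> {K..}" shows "(\<Sum>k\<in>G. (1/2::real)^k) \<le> 2*(1/2)^K"
proof -
  define M where "M = Suc (Max (insert K G))"
  have "G \<subseteq> {K..<M}" using assms unfolding M_def by (auto simp: less_Suc_eq_le)
  hence "(\<Sum>k\<in>G. (1/2::real)^k) \<le> (\<Sum>k\<in>{K..<M}. (1/2::real)^k)"
    by (intro sum_mono2) auto
  also have "\<dots> = 2*(1/2)^K - 2*(1/2)^M" using geo[of K M] assms unfolding M_def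
    by (simp add: le_SucI)
  also have "\<dots> \<le> 2*(1/2)^K" by simp
  finally show ?thesis .
qed

lemma Abound: assumes "finite F" "F \<subseteq> A" "\<And>k. a k \<in> F \<Longrightarrow> K \<le> k"
  shows "sum y F \<le> 2*(1/2)^K"
proof -
  define G where "G = {k. a k \<in> F}"
  have inj: "inj a" using amono by (simp add: strict_mono_imp_inj_on)
  have FG: "F = a ` G" using assms(2) unfolding G_def A_def by auto
  have fG: "finite G" unfolding G_def using assms(1) inj
    by (metis finite_vimageI vimage_def Collect_mem_eq)
  have "sum y F = sum (y \<circ> a) G" unfolding FG by (rule sum.reindex) (use inj in \<open>auto intro: inj_on_subset\<close>)
  also have "\<dots> \<le> (\<Sum>k\<in>G. (1/2::real)^k)" by (intro sum_mono) (simp add: asmall)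
  also have "\<dots> \<le> 2*(1/2)^K" using geo2[OF fG] assms(3) unfolding G_def by auto
  finally show ?thesis .
qed

lemma L: "\<exists>N\<ge>N0. N \<notin> U N \<and> \<not> sum y (P N) + y N \<le> d"
proof (rule ccontr)
  assume "\<not> ?thesis"
  hence ab: "\<And>N. N \<ge> N0 \<Longrightarrow> N \<in> U N \<or> sum y (P N) + y N \<le> d" by auto
  have gt: "N < pi N" if "N \<ge> N0" for N
    using pi_cases[of N] ab[OF that] nextA[OF finU, of N N] by auto
  have stay: "n \<notin> U M" if "n \<ge> N0" "n \<notin> A" "n \<le> M" for n M
    using that(3)
  proof (induction M rule: dec_induct)
    case base thus ?case using high[of n n] that by auto
  next
    case (step M) thus ?case using gt[of M] that by (auto simp: U_Suc)
  qed
  have bnd: "(\<Sum>k\<le>m. y k) \<le> sum y {..<N0} + d + 2" for m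
  proof -
    define M where "M = Suc m"
    have "(\<Sum>k\<le>m. y k) \<le> sum y ({..<N0} \<union> {N0..<M})"
      by (intro sum_mono2) (auto simp: M_def less_imp_le pos)
    also have "\<dots> = sum y {..<N0} + sum y {N0..<M}"
      by (rule sum.union_disjoint) auto
    also have "sum y {N0..<M} = sum y ({N0..<M} \<inter> A) + sum y ({N0..<M} - A)"
      by (rule sum.Int_Diff) simp
    also have "sum y ({N0..<M} - A) \<le> sum y (P M)"
    proof (intro sum_mono2)
      show "{N0..<M} - A \<subseteq> P M" using stay unfolding P_def by auto
    qed (auto simp: finP less_imp_le pos)
    also have "sum y ({N0..<M} \<inter> A) \<le> 2" using Abound[of "{N0..<M} \<inter> A" 0] by auto
    finally show ?thesis using Psum_le[of M] by linarith
  qed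
  have "summable y" by (rule bounded_imp_summable[OF less_imp_le[OF pos] bnd])
  thus False using div by simp
qed

lemma ex_U: "(\<forall>i<m. \<exists>k. i \<in> U k) \<Longrightarrow> \<exists>N. {..<m} \<subseteq> U N"
proof (induction m)
  case 0 thus ?case by simp
next
  case (Suc m)
  then obtain N where N: "{..<m} \<subseteq> U N" by auto
  obtain k where k: "m \<in> U k" using Suc by auto
  have "{..<Suc m} \<subseteq> U (max N k)" using N k U_mono[of N "max N k"] U_mono[of k "max N k"]
    by (auto simp: lessThan_Suc)
  thus ?case by blast
qed

lemma inU: "i \<in> range pi \<Longrightarrow> \<exists>k. i \<in> U k"
  using U_img by blast

lemma surj_pi: "surj pi"
proof (rule ccontr)
  assume "\<not> surj pi"
  then obtain m0 where "m0 \<notin> range pi" by auto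
  define m where "m = (LEAST m. m \<notin> range pi)"
  have mr: "m \<notin> range pi" unfolding m_def by (rule LeastI[of _ m0]) fact
  have lt: "i \<in> range pi" if "i < m" for i using not_less_Least[of i "\<lambda>m. m \<notin> range pi"] that
    unfolding m_def by blast
  obtain N0 where N0: "{..<m} \<subseteq> U N0" using ex_U[of m] lt inU by blast
  have mU: "m \<notin> U N" for N using mr U_img by auto
  have "\<forall>\<^sub>F n in sequentially. y n < y m" using order_tendstoD(2)[OF lim pos[of m]] .
  then obtain N1 where N1: "\<And>n. n \<ge> N1 \<Longrightarrow> y n < y m" by (auto simp: eventually_sequentially)
  obtain N where N: "N \<ge> max (max N0 N1) (Suc m)" "N \<notin> U N" "\<not> sum y (P N) + y N \<le> d"
    using L by blast
  have mP: "m \<in> P N" using N mU unfolding P_def by auto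
  have "Min (P N) = m"
  proof (rule Min_eqI[OF finP _ mP])
    fix x assume "x \<in> P N"
    thus "m \<le> x" using N0 U_mono[of N0 N] N unfolding P_def by (cases "x < m") auto
  qed
  hence "pi N = m" using pi_cases[of N] N mP N1[of N] by auto
  thus False using mr by auto
qed

lemma bij_pi: "bij pi" using inj_pi surj_pi by (simp add: bij_def)

lemma P_large: "\<exists>N0. \<forall>N\<ge>N0. \<forall>x\<in>P N. K \<le> x"
proof -
  obtain N0 where "{..<K} \<subseteq> U N0" using ex_U[of K] surj_pi inU by auto
  hence "\<forall>N\<ge>N0. \<forall>x\<in>P N. K \<le> x" using U_mono[of N0] unfolding P_def
    by (auto simp: not_le[symmetric]) (meson lessThan_iff not_le subsetD)
  thus ?thesis by blast
qed

lemma Psum_lim: "(\<lambda>N. sum y (P N)) \<longlonglongrightarrow> d"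
proof (rule LIMSEQ_I)
  fix r :: real assume r: "0 < r"
  define e where "e = r/2"
  have e: "e > 0" using r by (simp add: e_def)
  have "\<forall>\<^sub>F n in sequentially. y n < e" using order_tendstoD(2)[OF lim e] .
  then obtain K where K: "\<And>n. n \<ge> K \<Longrightarrow> y n < e" by (auto simp: eventually_sequentially)
  obtain N3 where N3: "\<forall>N\<ge>N3. \<forall>x\<in>P N. K \<le> x" using P_large by blast
  have prem: "y N \<le> e \<and> (P N \<noteq> {} \<longrightarrow> y (Min (P N)) \<le> e)" if "N \<ge> max N3 K" for N
  proof -
    have "P N \<noteq> {} \<Longrightarrow> K \<le> Min (P N)" using N3 that Min_in[OF finP, of N] by auto
    thus ?thesis using K that by (auto intro: less_imp_le)
  qed
  obtain N4 where N4: "N4 \<ge> max N3 K" "N4 \<notin> U N4" "\<not> sum y (P N4) + y N4 \<le> d"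
    using L by blast
  have base: "sum y (P (Suc N4)) \<ge> d - e" using Psum_lower(2)[OF _ _ N4(2,3)] prem[OF N4(1)] by auto
  have all: "sum y (P N) \<ge> d - e" if "N \<ge> Suc N4" for N
    using that
  proof (induction N rule: dec_induct)
    case base thus ?case using \<open>sum y (P (Suc N4)) \<ge> d - e\<close> by simp
  next
    case (step N)
    have "N \<ge> max N3 K" using step N4 by auto
    hence "sum y (P (Suc N)) \<ge> min (sum y (P N)) (d - e)" using Psum_lower(1) prem by blast
    thus ?case using step by linarith
  qed
  have "\<forall>N\<ge>Suc N4. norm (sum y (P N) - d) < r"
    using all Psum_le e unfolding e_def by (smt (verit, best) field_sum_of_halves real_norm_def)
  thus "\<exists>no. \<forall>n\<ge>no. norm (sum y (P n) - d) < r" by blast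
qed

lemma H_lim: "(\<lambda>N. sum y (U N - {..<N})) \<longlonglongrightarrow> 0"
proof (rule LIMSEQ_I)
  fix r :: real assume r: "0 < r"
  have "(\<lambda>K. (1/2::real)^K) \<longlonglongrightarrow> 0" by (rule LIMSEQ_power_zero) simp
  from order_tendstoD(2)[OF this, of "r/2"] r
  obtain K where K: "(1/2::real)^K < r/2" by (auto simp: eventually_sequentially)
  have "norm (sum y (U N - {..<N}) - 0) < r" if "N \<ge> Suc (a K)" for N
  proof -
    have sub: "U N - {..<N} \<subseteq> A" using high not_le by blast
    have "K \<le> k" if "a k \<in> U N - {..<N}" for k
    proof -
      have "a K < a k" using that \<open>N \<ge> Suc (a K)\<close> by auto
      thus ?thesis using amono by (simp add: strict_mono_less)
    qed
    hence "sum y (U N - {..<N}) \<le> 2*(1/2)^K" using Abound[of "U N - {..<N}" K] sub finU by auto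
    moreover have "sum y (U N - {..<N}) \<ge> 0" by (intro sum_nonneg) (simp add: less_imp_le pos)
    ultimately show ?thesis using K by simp
  qed
  thus "\<exists>no. \<forall>n\<ge>no. norm (sum y (U n - {..<n}) - 0) < r" by blast
qed

lemma psum: "(\<Sum>n<N. y n - y (pi n)) = sum y (P N) - sum y (U N - {..<N})"
proof -
  have "(\<Sum>n<N. y n - y (pi n)) = sum y {..<N} - sum (y \<circ> pi) {..<N}"
    by (simp add: sum_subtractf)
  also have "sum (y \<circ> pi) {..<N} = sum y (U N)" unfolding U_img
    by (rule sum.reindex[symmetric]) (use inj_pi in \<open>auto intro: inj_on_subset\<close>)
  also have "sum y {..<N} = sum y ({..<N} \<inter> U N) + sum y (P N)"
    unfolding P_def by (rule sum.Int_Diff) simp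
  also have "sum y (U N) = sum y (U N \<inter> {..<N}) + sum y (U N - {..<N})"
    by (rule sum.Int_Diff) (rule finU)
  finally show ?thesis by (simp add: Int_commute)
qed

lemma result: "(\<lambda>n. y n - y (pi n)) sums d"
  unfolding sums_def psum using tendsto_diff[OF Psum_lim H_lim] by simp

end

lemma exist_perm:
  fixes y :: "nat \<Rightarrow> real" and d :: real
  assumes pos: "\<And>n. y n > 0" and div: "\<not> summable y" and lim: "y \<longlonglongrightarrow> 0" and dnn: "d \<ge> 0"
  shows "\<exists>p. bij p \<and> (\<lambda>n. y n - y (p n)) sums d"
proof -
  have "\<forall>k. \<exists>N. \<forall>n\<ge>N. y n \<le> (1/2)^k"
  proof
    fix k
    have "\<forall>\<^sub>F n in sequentially. y n < (1/2)^k" by (rule order_tendstoD(2)[OF lim]) simp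
    thus "\<exists>N. \<forall>n\<ge>N. y n \<le> (1/2)^k" by (auto simp: eventually_sequentially intro: less_imp_le)
  qed
  then obtain h where h: "\<And>k n. n \<ge> h k \<Longrightarrow> y n \<le> (1/2)^k" by metis
  define a where "a k = (\<Sum>i\<le>k. h i) + k" for k
  have am: "strict_mono a" unfolding strict_mono_Suc_iff a_def by simp
  have "h k \<le> a k" for k unfolding a_def using member_le_sum[of k "{..k}" h] by simp
  hence as: "y (a k) \<le> (1/2)^k" for k using h by blast
  interpret c: cons y d a using pos div lim dnn am as by unfold_locales auto
  show ?thesis using c.bij_pi c.result by blast
qed

lemma comp_lim:
  fixes x :: "nat \<Rightarrow> real"
  assumes "bij s" "x \<longlonglongrightarrow> 0"
  shows "(\<lambda>n. x (s n)) \<longlonglongrightarrow> 0"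
proof (rule LIMSEQ_I)
  fix r :: real assume r: "r > 0"
  obtain K where K: "\<And>n. n \<ge> K \<Longrightarrow> norm (x n - 0) < r" using LIMSEQ_D[OF assms(2) r] by blast
  have fin: "finite (s -` {..<K})" using assms(1) by (intro finite_vimageI) (auto simp: bij_def)
  then obtain B where B: "\<And>n. n \<in> s -` {..<K} \<Longrightarrow> n < B" using finite_nat_bounded by (metis lessThan_iff subsetD)
  have "\<forall>n\<ge>B. norm (x (s n) - 0) < r"
  proof (intro allI impI)
    fix n assume "n \<ge> B"
    hence "s n \<ge> K" using B[of n] by (cases "s n < K") auto
    thus "norm (x (s n) - 0) < r" using K by blast
  qed
  thus "\<exists>no. \<forall>n\<ge>no. norm (x (s n) - 0) < r" by blast
qed

theorem mainTheorem5:
  fixes x :: "nat \<Rightarrow> real" and b :: real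
  assumes "\<And>n. x n > 0"
    and "\<not> summable x"
    and "x \<longlonglongrightarrow> 0"
    and "b \<in> rearr_diff_sums x"
  shows "{b..} \<subseteq> rearr_diff_sums x"
proof
  fix c assume "c \<in> {b..}"
  hence cb: "c - b \<ge> 0" by simp
  obtain s where s: "bij s" "(\<lambda>n. x n - x (s n)) sums b" using assms(4) unfolding rearr_diff_sums_def by blast
  define y where "y n = x (s n)" for n
  have ypos: "\<And>n. y n > 0" using assms(1) by (simp add: y_def)
  have ylim: "y \<longlonglongrightarrow> 0" unfolding y_def by (rule comp_lim[OF s(1) assms(3)])
  have ydiv: "\<not> summable y"
  proof
    assume "summable y"
    hence "y summable_on UNIV" using summable_on_UNIV_nonneg_real_iff[of y] ypos by (simp add: less_imp_le)
    hence "x summable_on UNIV" using summable_on_reindex_bij_betw[of s UNIV UNIV x] s(1)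
      by (simp add: y_def[abs_def] bij_betw_def bij_def)
    hence "summable x" using summable_on_UNIV_nonneg_real_iff[of x] assms(1) by (simp add: less_imp_le)
    thus False using assms(2) by simp
  qed
  obtain p where p: "bij p" "(\<lambda>n. y n - y (p n)) sums (c - b)"
    using exist_perm[OF ypos ydiv ylim cb] by blast
  have "(\<lambda>n. (x n - x (s n)) + (y n - y (p n))) sums (b + (c - b))" by (rule sums_add[OF s(2) p(2)])
  hence "(\<lambda>n. x n - x ((s \<circ> p) n)) sums c" by (simp add: y_def)
  moreover have "bij (s \<circ> p)" using bij_comp[OF p(1) s(1)] .
  ultimately show "c \<in> rearr_diff_sums x" unfolding rearr_diff_sums_def by blast
qed

end
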